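(* Let $A\in\mathbb{R}^{n\times n}$, $B\in\mathbb{R}^{n\times m}$, horizon $N\ge1$, $\theta\in(0,1)$. For $t\in\{1,\dots,N\}$ let $\mathcal{X}_t=\{x\in\mathbb{R}^n\mid (x-p_t)^\top P_t(x-p_t)\le1\}$ and let $\mathcal{U}=\{u\in\mathbb{R}^m\mid u^\top Qu\le1\}$, with $p_t\in\mathbb{R}^n$ and $P_t$, $Q$ symmetric positive definite. Let $Y\in\mathbb{R}^{n\times n}$ be symmetric positive definite and $\mathcal{W}=\{w\mid w^\top Yw\le1\}$, and let $w^{(0)}(0),\dots,w^{(0)}(N-1)$ be a random disturbance sequence such that $\Pr\{w^{(0)}(t)\in\mathcal{W}\ \forall t\in\{0,\dots,N-1\}\}\ge1-\theta$. Let $(\hat\Phi^*,\Psi^*,\lambda_0^*,\lambda_1^* )$ be a feasible solution of the program: minimize $\operatorname{trace}\hat\Phi$ over symmetric $\hat\Phi\succ0$, $\Psi\in\mathbb{R}^{m\times n}$, $\lambda_0,\lambda_1\in\mathbb{R}$ subject to $\lambda_0\ge0$, $\lambda_1\ge0$, $1-\lambda_0-\lambda_1\ge0$; $\begin{bmatrix}\hat\Phi-\frac{1}{\lambda_1}Y^{-1} & A\hat\Phi+B\Psi\\ (A\hat\Phi+B\Psi)^\top & \lambda_0\hat\Phi\end{bmatrix}\succeq0$; $\begin{bmatrix}\hat\Phi & \Psi^\top Q^{1/2}\\ Q^{1/2}\Psi & I\end{bmatrix}\succ0$; $\hat\Phi\prec P_t^{-1}$ for all $t\in\{1,\dots,N\}$.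 Define $\Phi=(\hat\Phi^* )^{-1}$, $K=\Psi^*\Phi$, $\mathcal{E}=\{e\mid e^\top\Phi e\le1\}$, $\mathcal{E}_u=\{Ke\mid e\in\mathcal{E}\}$, and let $e^{(0)}$ be the trajectory of the error system $e^{(0)}(t+1)=(A+BK)e^{(0)}(t)+w^{(0)}(t)$, $e^{(0)}(0)=0$. Then: (i) $\Pr\{e^{(0)}(t)\in\mathcal{E}\ \forall t\in\{1,\dots,N\}\}\ge1-\theta$; (ii) $\mathrm{int}(\mathcal{X}_t\ominus\mathcal{E})\ne\emptyset$ for all $t\in\{1,\dots,N\}$; (iii) $\mathrm{int}(\mathcal{U}\ominus\mathcal{E}_u)\ne\emptyset$.
   Context: $Q^{1/2}$ denotes the symmetric positive definite square root of $Q$; $\succ,\succeq$ denote the Loewner order. The Pontryagin difference is $S_1\ominus S_2=\{s_1\mid s_1+s_2\in S_1\ \forall s_2\in S_2\}$ and $\mathrm{int}$ denotes the interior of a set. *)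

theory Defs
  imports "HOL-Probability.Probability"
begin

definition psd_mat :: "real^'n^'n \<Rightarrow> bool" where
  "psd_mat M \<longleftrightarrow> transpose M = M \<and> (\<forall>x. 0 \<le> x \<bullet> (M *v x))"

definition pd_mat :: "real^'n^'n \<Rightarrow> bool" where
  "pd_mat M \<longleftrightarrow> transpose M = M \<and> (\<forall>x. x \<noteq> 0 \<longrightarrow> 0 < x \<bullet> (M *v x))"

definition msqrt :: "real^'n^'n \<Rightarrow> real^'n^'n" where
  "msqrt Q = (THE S. pd_mat S \<and> S ** S = Q)"

definition block_mat ::
  "real^'n^'n \<Rightarrow> real^'m^'n \<Rightarrow> real^'n^'m \<Rightarrow> real^'m^'m \<Rightarrow> real^('n + 'm)^('n + 'm)" where
  "block_mat X Z V W = (\<chi> i j. case i of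
       Inl a \<Rightarrow> (case j of Inl b \<Rightarrow> X$a$b | Inr b \<Rightarrow> Z$a$b)
     | Inr a \<Rightarrow> (case j of Inl b \<Rightarrow> V$a$b | Inr b \<Rightarrow> W$a$b))"

definition pontryagin_diff :: "'a::ab_group_add set \<Rightarrow> 'a set \<Rightarrow> 'a set" where
  "pontryagin_diff S1 S2 = {s1. \<forall>s2\<in>S2. s1 + s2 \<in> S1}"

primrec err_traj :: "real^'n^'n \<Rightarrow> (nat \<Rightarrow> real^'n) \<Rightarrow> nat \<Rightarrow> real^'n" where
  "err_traj F w 0 = 0"
| "err_traj F w (Suc t) = F *v err_traj F w t + w t"

end

theory Submission
  imports Defs
begin


lemma quad_scale: "((c::real) *\<^sub>R x) \<bullet> (M *v (c *\<^sub>R x)) = c^2 * (x \<bullet> (M *v (x::real^'n)))"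
  by (simp add: matrix_vector_mult_scaleR power2_eq_square)

lemma cont_quad: "continuous_on S (\<lambda>x::real^'n. x \<bullet> (M *v x))"
  by (intro continuous_intros linear_continuous_on matrix_vector_mul_bounded_linear)

lemma dot_mat_transpose: "(x::real^'n) \<bullet> (M *v y) = (transpose M *v x) \<bullet> y"
  by (metis dot_lmul_matrix transpose_matrix_vector)

lemma sym_dot: "transpose M = M \<Longrightarrow> (x::real^'n) \<bullet> (M *v y) = (M *v x) \<bullet> y"
  by (metis dot_mat_transpose)

lemma mv_sum: "finite A \<Longrightarrow> (M::real^'n^'m) *v (\<Sum>a\<in>A. f a) = (\<Sum>a\<in>A. M *v f a)"
  by (induct rule: finite_induct) (simp_all add: matrix_vector_right_distrib)

definition oe :: "real^'n^'n \<Rightarrow> (real^'n) set \<Rightarrow> bool" where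
  "oe Q B \<longleftrightarrow> finite B \<and> (\<forall>b\<in>B. b \<bullet> b = 1 \<and> Q *v b = (b \<bullet> (Q *v b)) *\<^sub>R b)
      \<and> (\<forall>b\<in>B. \<forall>c\<in>B. b \<noteq> c \<longrightarrow> b \<bullet> c = 0)"

lemma oe_card: "oe Q B \<Longrightarrow> card B \<le> DIM(real^'n)" for B :: "(real^'n) set"
proof -
  assume h: "oe Q B"
  have "pairwise orthogonal B" using h unfolding oe_def pairwise_def orthogonal_def by blast
  moreover have "0 \<notin> B" using h unfolding oe_def by force
  ultimately have "independent B" by (rule pairwise_orthogonal_independent)
  then show ?thesis using independent_bound by blast
qed

lemma oe_sum_inner:
  assumes "oe Q B" "c \<in> B"
  shows "(\<Sum>b\<in>B. g b *\<^sub>R b) \<bullet> c = g c"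
proof -
  have "(\<Sum>b\<in>B. g b *\<^sub>R b) \<bullet> c = (\<Sum>b\<in>B. g b * (b \<bullet> c))" by (simp add: inner_sum_left)
  also have "\<dots> = (\<Sum>b\<in>B. if b = c then g c else 0)"
    using assms unfolding oe_def by (intro sum.cong) auto
  also have "\<dots> = g c" using assms unfolding oe_def by simp
  finally show ?thesis .
qed

lemma eig_step:
  fixes Q :: "real^'n^'n"
  assumes sym: "transpose Q = Q" and B: "oe Q B" and r: "r \<noteq> 0" "\<forall>c\<in>B. r \<bullet> c = 0"
  shows "\<exists>v. oe Q (insert v B) \<and> v \<notin> B"
proof -
  define T where "T = (\<Inter>c\<in>B. {y::real^'n. y \<bullet> c = 0})"
  have Tmem: "y \<in> T \<longleftrightarrow> (\<forall>c\<in>B. y \<bullet> c = 0)" for y unfolding T_def by auto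
  have clT: "closed T" unfolding T_def
    by (intro closed_INT ballI) (simp add: closed_Collect_eq continuous_intros)
  let ?K = "T \<inter> sphere 0 1"
  have cK: "compact ?K" using clT by (intro closed_Int_compact compact_sphere)
  have "(1 / norm r) *\<^sub>R r \<in> ?K" using r by (simp add: Tmem)
  then have neK: "?K \<noteq> {}" by blast
  obtain v where v: "v \<in> ?K" "\<forall>y\<in>?K. y \<bullet> (Q *v y) \<le> v \<bullet> (Q *v v)"
    using continuous_attains_sup[OF cK neK cont_quad] by blast
  define l where "l = v \<bullet> (Q *v v)"
  have vT: "v \<in> T" and vv: "v \<bullet> v = 1" using v(1) by (auto simp: inner_commute dot_square_norm)
  have bound: "y \<bullet> (Q *v y) \<le> l * (y \<bullet> y)" if "y \<in> T" for y
  proof (cases "y = 0")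
    case True then show ?thesis by simp
  next
    case False
    define n where "n = norm y"
    have n0: "n > 0" using False n_def by simp
    define z where "z = (1/n) *\<^sub>R y"
    have "z \<in> T" using that by (simp add: Tmem z_def)
    then have zK: "z \<in> ?K" using n0 by (simp add: z_def n_def)
    have y: "y = n *\<^sub>R z" using n0 by (simp add: z_def)
    have "y \<bullet> (Q *v y) = n^2 * (z \<bullet> (Q *v z))" using y quad_scale by metis
    also have "\<dots> \<le> n^2 * l" using v(2) zK l_def by (simp add: mult_left_mono)
    also have "n^2 = y \<bullet> y" by (simp add: n_def dot_square_norm)
    finally show ?thesis by (simp add: mult.commute)
  qed
  have eigB: "Q *v c = (c \<bullet> (Q *v c)) *\<^sub>R c" if "c \<in> B" for c using B that unfolding oe_def by blast
  have QvT: "Q *v v \<in> T" unfolding Tmem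
  proof
    fix c assume c: "c \<in> B"
    have "(Q *v v) \<bullet> c = v \<bullet> (Q *v c)" using sym_dot[OF sym] by (metis inner_commute)
    also have "\<dots> = (c \<bullet> (Q *v c)) * (v \<bullet> c)" by (subst eigB[OF c]) simp
    also have "\<dots> = 0" using vT c by (simp add: Tmem)
    finally show "(Q *v v) \<bullet> c = 0" .
  qed
  define u where "u = Q *v v - l *\<^sub>R v"
  have uT: "u \<in> T" using QvT vT unfolding u_def Tmem by (simp add: inner_diff_left)
  have uv: "u \<bullet> v = 0" unfolding u_def l_def using vv by (simp add: inner_diff_left inner_diff_right inner_commute)
  have uQv: "u \<bullet> (Q *v v) = u \<bullet> u"
  proof -
    have "Q *v v = u + l *\<^sub>R v" by (simp add: u_def)
    then show ?thesis using uv by (simp add: inner_add_right)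
  qed
  have vQu: "v \<bullet> (Q *v u) = u \<bullet> u" using uQv sym_dot[OF sym] by (metis inner_commute)
  have ineq: "2 * t * (u \<bullet> u) \<le> t^2 * (l * (u \<bullet> u) - u \<bullet> (Q *v u))" for t
  proof -
    have "v + t *\<^sub>R u \<in> T" using vT uT by (simp add: Tmem inner_add_left)
    then have h: "(v + t *\<^sub>R u) \<bullet> (Q *v (v + t *\<^sub>R u)) \<le> l * ((v + t *\<^sub>R u) \<bullet> (v + t *\<^sub>R u))"
      by (rule bound)
    have e1: "(v + t *\<^sub>R u) \<bullet> (Q *v (v + t *\<^sub>R u)) = l + 2 * t * (u \<bullet> u) + t^2 * (u \<bullet> (Q *v u))"
      using uQv vQu unfolding l_def
      by (simp add: matrix_vector_right_distrib matrix_vector_mult_scaleR inner_add_left inner_add_right power2_eq_square) (simp add: distrib_left mult.assoc)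
    have e2: "(v + t *\<^sub>R u) \<bullet> (v + t *\<^sub>R u) = 1 + t^2 * (u \<bullet> u)"
      using uv vv by (simp add: inner_add_left inner_add_right inner_commute power2_eq_square)
    show ?thesis using h unfolding e1 e2 by (simp add: algebra_simps)
  qed
  have u0: "u = 0"
  proof (rule ccontr)
    assume "u \<noteq> 0"
    then have a0: "u \<bullet> u > 0" by simp
    define c where "c = l * (u \<bullet> u) - u \<bullet> (Q *v u)"
    define t where "t = (u \<bullet> u) / (\<bar>c\<bar> + 1)"
    have t0: "t > 0" using a0 by (simp add: t_def)
    have "2 * t * (u \<bullet> u) \<le> t^2 * c" using ineq c_def by simp
    also have "\<dots> \<le> t^2 * \<bar>c\<bar>" by (simp add: mult_left_mono)
    also have "\<dots> = t * (u \<bullet> u) * (\<bar>c\<bar> / (\<bar>c\<bar> + 1))" by (simp add: t_def power2_eq_square field_simps)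
    also have "\<dots> \<le> t * (u \<bullet> u) * 1"
      using t0 a0 by (intro mult_left_mono) (simp_all add: field_simps)
    finally show False using t0 a0 using mult_pos_pos[OF t0 a0] by linarith
  qed
  then have Qv: "Q *v v = (v \<bullet> (Q *v v)) *\<^sub>R v" by (simp add: u_def l_def)
  have vB: "v \<notin> B" using vT vv by (auto simp: Tmem)
  have "oe Q (insert v B)"
    using B Qv vv vT unfolding oe_def by (auto simp: Tmem inner_commute)
  then show ?thesis using vB by blast
qed

lemma spectral:
  fixes Q :: "real^'n^'n"
  assumes sym: "transpose Q = Q"
  shows "\<exists>B. oe Q B \<and> (\<forall>x. x = (\<Sum>b\<in>B. (x \<bullet> b) *\<^sub>R b))"
proof -
  have "oe Q {}" by (simp add: oe_def)
  moreover have "\<forall>B. oe Q B \<longrightarrow> card B < DIM(real^'n) + 1" using oe_card by (metis less_Suc_eq_le Suc_eq_plus1)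
  ultimately obtain B where B: "oe Q B" and mx: "\<forall>B'. oe Q B' \<longrightarrow> card B' \<le> card B"
    using ex_has_greatest_nat[of "oe Q" "{}" card] by blast
  have "x = (\<Sum>b\<in>B. (x \<bullet> b) *\<^sub>R b)" for x
  proof (rule ccontr)
    assume ne: "x \<noteq> (\<Sum>b\<in>B. (x \<bullet> b) *\<^sub>R b)"
    define r where "r = x - (\<Sum>b\<in>B. (x \<bullet> b) *\<^sub>R b)"
    have "r \<noteq> 0" using ne r_def by simp
    moreover have "\<forall>c\<in>B. r \<bullet> c = 0" using oe_sum_inner[OF B] by (simp add: r_def inner_diff_left)
    ultimately obtain v where "oe Q (insert v B)" "v \<notin> B" using eig_step[OF sym B] by blast
    moreover have "finite B" using B oe_def by blast
    ultimately show False using mx by fastforce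
  qed
  then show ?thesis using B by blast
qed



definition sqm :: "real^'n^'n \<Rightarrow> (real^'n) set \<Rightarrow> real^'n^'n" where
  "sqm Q B = (\<chi> i j. \<Sum>b\<in>B. sqrt (b \<bullet> (Q *v b)) * b$i * b$j)"

lemma sqm_mv: "finite B \<Longrightarrow> sqm Q B *v x = (\<Sum>b\<in>B. (sqrt (b \<bullet> (Q *v b)) * (b \<bullet> x)) *\<^sub>R b)"
  unfolding vec_eq_iff
  by (simp add: matrix_vector_mult_def sqm_def inner_vec_def sum_distrib_left sum_distrib_right
      sum.swap[of _ B] mult_ac)

lemma sqm_sym: "transpose (sqm Q B) = sqm Q B"
  unfolding sqm_def transpose_def vec_eq_iff by (simp add: mult_ac)

lemma matrix_eq_mv: "(\<And>x. A *v x = C *v x) \<Longrightarrow> A = (C::real^'n^'m)"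
  using matrix_eq by blast

lemma msqrt_props:
  fixes Q :: "real^'n^'n"
  assumes Qpd: "pd_mat Q"
  shows "pd_mat (msqrt Q) \<and> msqrt Q ** msqrt Q = Q"
proof -
  have sym: "transpose Q = Q" using Qpd pd_mat_def by blast
  obtain B where B: "oe Q B" and ex: "\<And>x. x = (\<Sum>b\<in>B. (x \<bullet> b) *\<^sub>R b)" using spectral[OF sym] by blast
  have fin: "finite B" using B oe_def by blast
  define lam where "lam b = b \<bullet> (Q *v b)" for b
  have lam0: "lam b > 0" if "b \<in> B" for b
  proof -
    have "b \<bullet> b = 1" using B that oe_def by blast
    then have "b \<noteq> 0" by auto
    then show ?thesis using Qpd unfolding lam_def pd_mat_def by blast
  qed
  have eig: "Q *v b = lam b *\<^sub>R b" if "b \<in> B" for b using B that unfolding oe_def lam_def by blast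
  define S where "S = sqm Q B"
  have Smv: "S *v x = (\<Sum>b\<in>B. (sqrt (lam b) * (b \<bullet> x)) *\<^sub>R b)" for x
    unfolding S_def lam_def using sqm_mv[OF fin] by blast
  have Sb: "(S *v x) \<bullet> b = sqrt (lam b) * (b \<bullet> x)" if "b \<in> B" for x b
    unfolding Smv by (rule oe_sum_inner[OF B that])
  have Qx: "Q *v x = (\<Sum>b\<in>B. (lam b * (b \<bullet> x)) *\<^sub>R b)" for x
  proof -
    have "Q *v x = Q *v (\<Sum>b\<in>B. (x \<bullet> b) *\<^sub>R b)" using ex by metis
    also have "\<dots> = (\<Sum>b\<in>B. (x \<bullet> b) *\<^sub>R (Q *v b))" by (simp add: mv_sum[OF fin] matrix_vector_mult_scaleR)
    also have "\<dots> = (\<Sum>b\<in>B. (lam b * (b \<bullet> x)) *\<^sub>R b)"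
      by (intro sum.cong refl) (simp add: eig inner_commute)
    finally show ?thesis .
  qed
  have SS: "S ** S = Q"
  proof (rule matrix_eq_mv)
    fix x
    have "(S ** S) *v x = S *v (S *v x)" by (simp add: matrix_vector_mul_assoc)
    also have "\<dots> = (\<Sum>b\<in>B. (sqrt (lam b) * (b \<bullet> (S *v x))) *\<^sub>R b)" by (rule Smv)
    also have "\<dots> = (\<Sum>b\<in>B. (lam b * (b \<bullet> x)) *\<^sub>R b)"
    proof (intro sum.cong refl)
      fix b assume b: "b \<in> B"
      have "b \<bullet> (S *v x) = sqrt (lam b) * (b \<bullet> x)" using Sb[OF b] by (simp add: inner_commute)
      moreover have "sqrt (lam b) * sqrt (lam b) = lam b" using lam0[OF b] by simp
      ultimately show "(sqrt (lam b) * (b \<bullet> (S *v x))) *\<^sub>R b = (lam b * (b \<bullet> x)) *\<^sub>R b"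
        by (simp add: mult.assoc[symmetric])
    qed
    also have "\<dots> = Q *v x" by (rule Qx[symmetric])
    finally show "(S ** S) *v x = Q *v x" .
  qed
  have Spd: "pd_mat S"
    unfolding pd_mat_def
  proof safe
    show "transpose S = S" unfolding S_def by (rule sqm_sym)
    fix x :: "real^'n" assume x0: "x \<noteq> 0"
    have q: "x \<bullet> (S *v x) = (\<Sum>b\<in>B. sqrt (lam b) * (b \<bullet> x)^2)"
      unfolding Smv by (simp add: inner_sum_right power2_eq_square inner_commute mult.assoc)
    obtain b where b: "b \<in> B" "b \<bullet> x \<noteq> 0"
    proof (rule ccontr)
      assume "\<not> thesis"
      then have "\<forall>b\<in>B. x \<bullet> b = 0" using that by (auto simp: inner_commute)
      then have "x = 0" using ex[of x] by simp
      then show False using x0 by simp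
    qed
    have "0 < (\<Sum>b\<in>B. sqrt (lam b) * (b \<bullet> x)^2)"
    proof (rule sum_pos2[OF fin b(1)])
      show "0 < sqrt (lam b) * (b \<bullet> x)^2" using lam0[OF b(1)] b(2) by simp
      show "\<And>i. i \<in> B \<Longrightarrow> 0 \<le> sqrt (lam i) * (i \<bullet> x)^2"
        using lam0 by (simp add: less_imp_le)
    qed
    then show "0 < x \<bullet> (S *v x)" using q by simp
  qed
  have uniq: "R = S" if R: "pd_mat R \<and> R ** R = Q" for R
  proof -
    have Rb: "R *v b = sqrt (lam b) *\<^sub>R b" if b: "b \<in> B" for b
    proof (rule ccontr)
      assume ne: "R *v b \<noteq> sqrt (lam b) *\<^sub>R b"
      define u where "u = R *v b - sqrt (lam b) *\<^sub>R b"
      have u0: "u \<noteq> 0" using ne u_def by simp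
      have "R *v (R *v b) = Q *v b" using R by (simp add: matrix_vector_mul_assoc)
      then have "R *v u + sqrt (lam b) *\<^sub>R u = 0"
        using eig[OF b] lam0[OF b] unfolding u_def
        by (simp add: matrix_vector_mult_diff_distrib matrix_vector_mult_scaleR algebra_simps)
      then have "R *v u = - (sqrt (lam b) *\<^sub>R u)" by (simp add: eq_neg_iff_add_eq_0)
      then have "u \<bullet> (R *v u) = - (sqrt (lam b) * (u \<bullet> u))" by simp
      moreover have "u \<bullet> (R *v u) > 0" using R u0 unfolding pd_mat_def by blast
      moreover have "sqrt (lam b) * (u \<bullet> u) \<ge> 0" using lam0[OF b] by simp
      ultimately show False by linarith
    qed
    show ?thesis
    proof (rule matrix_eq_mv)
      fix x
      have "R *v x = R *v (\<Sum>b\<in>B. (x \<bullet> b) *\<^sub>R b)" using ex by metis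
      also have "\<dots> = (\<Sum>b\<in>B. (x \<bullet> b) *\<^sub>R (R *v b))" by (simp add: mv_sum[OF fin] matrix_vector_mult_scaleR)
      also have "\<dots> = S *v x" unfolding Smv
        by (intro sum.cong refl) (simp add: Rb inner_commute mult.commute)
      finally show "R *v x = S *v x" .
    qed
  qed
  have "msqrt Q = S" unfolding msqrt_def
    by (rule the_equality) (use Spd SS uniq in blast)+
  then show ?thesis using Spd SS by simp
qed



lemma pd_inj:
  fixes M :: "real^'n^'n"
  assumes "pd_mat M" shows "inj ((*v) M)"
proof (rule injI)
  fix x y assume "M *v x = M *v y"
  then have "M *v (x - y) = 0" by (simp add: matrix_vector_mult_diff_distrib)
  then show "x = y" using assms unfolding pd_mat_def by (metis inner_zero_right less_irrefl right_minus_eq)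
qed

lemma pd_inverse:
  fixes M :: "real^'n^'n"
  assumes "pd_mat M"
  shows "M ** matrix_inv M = mat 1" "matrix_inv M ** M = mat 1"
proof -
  have "invertible M"
    using pd_inj[OF assms] matrix_left_invertible_injective invertible_left_inverse by blast
  then obtain A' where "M ** A' = mat 1 \<and> A' ** M = mat 1" unfolding invertible_def by blast
  then have "M ** matrix_inv M = mat 1 \<and> matrix_inv M ** M = mat 1"
    unfolding matrix_inv_def by (rule someI)
  then show "M ** matrix_inv M = mat 1" "matrix_inv M ** M = mat 1" by auto
qed

lemma inv_mv:
  fixes M :: "real^'n^'n"
  assumes "pd_mat M"
  shows "M *v (matrix_inv M *v x) = x" "matrix_inv M *v (M *v x) = x"
  using pd_inverse[OF assms] by (simp_all add: matrix_vector_mul_assoc)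

lemma pd_inv_sym:
  fixes M :: "real^'n^'n"
  assumes "pd_mat M"
  shows "transpose (matrix_inv M) = matrix_inv M"
proof -
  have s: "transpose M = M" using assms pd_mat_def by blast
  have "transpose (matrix_inv M) ** M = mat 1"
    using pd_inverse(1)[OF assms] s by (metis matrix_transpose_mul transpose_mat)
  then have "transpose (matrix_inv M) = transpose (matrix_inv M) ** (M ** matrix_inv M)"
    using pd_inverse(1)[OF assms] by simp
  also have "\<dots> = matrix_inv M"
    by (simp add: matrix_mul_assoc \<open>transpose (matrix_inv M) ** M = mat 1\<close>)
  finally show ?thesis .
qed

lemma pd_inv_pd:
  fixes M :: "real^'n^'n"
  assumes "pd_mat M"
  shows "pd_mat (matrix_inv M)"
  unfolding pd_mat_def
proof safe
  show "transpose (matrix_inv M) = matrix_inv M" by (rule pd_inv_sym[OF assms])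
  fix x :: "real^'n" assume "x \<noteq> 0"
  define y where "y = matrix_inv M *v x"
  have x: "x = M *v y" using inv_mv[OF assms] y_def by simp
  then have "y \<noteq> 0" using \<open>x \<noteq> 0\<close> by auto
  have "x \<bullet> (matrix_inv M *v x) = (M *v y) \<bullet> y" using x y_def by simp
  also have "\<dots> = y \<bullet> (M *v y)" by (simp add: inner_commute)
  finally show "0 < x \<bullet> (matrix_inv M *v x)" using assms \<open>y \<noteq> 0\<close> unfolding pd_mat_def by simp
qed

lemma pd_nonneg: "pd_mat M \<Longrightarrow> 0 \<le> x \<bullet> (M *v x)"
  unfolding pd_mat_def by (cases "x = 0") (auto intro: less_imp_le)

definition vjoin :: "real^'n \<Rightarrow> real^'m \<Rightarrow> real^('n+'m)" where
  "vjoin a b = (\<chi> i. case i of Inl k \<Rightarrow> a$k | Inr k \<Rightarrow> b$k)"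

lemma sum_UNIV_plus: "(\<Sum>i\<in>(UNIV::('n::finite+'m::finite) set). f i) = (\<Sum>k\<in>UNIV. f (Inl k)) + (\<Sum>k\<in>UNIV. f (Inr k))"
  using sum.Plus[OF finite_class.finite_UNIV finite_class.finite_UNIV, of f] by (simp add: UNIV_Plus_UNIV comp_def)

lemma block_quad:
  fixes X :: "real^'n^'n" and Z :: "real^'m^'n" and V :: "real^'n^'m" and W :: "real^'m^'m"
  shows "vjoin a b \<bullet> (block_mat X Z V W *v vjoin a b) =
     a \<bullet> (X *v a) + a \<bullet> (Z *v b) + b \<bullet> (V *v a) + b \<bullet> (W *v b)"
  unfolding inner_vec_def matrix_vector_mult_def block_mat_def vjoin_def
  by (simp add: sum_UNIV_plus sum.distrib distrib_left)

lemma vjoin_eq0: "vjoin a b = 0 \<longleftrightarrow> a = 0 \<and> b = 0"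
  unfolding vjoin_def vec_eq_iff by (auto split: sum.splits)

lemma invariance:
  fixes A Phat Y :: "real^'n^'n" and B :: "real^'m^'n" and Psi :: "real^'n^'m"
  assumes Ppd: "pd_mat Phat" and Ypd: "pd_mat Y"
    and lam: "lam0 \<ge> 0" "lam1 > 0" "1 - lam0 - lam1 \<ge> 0"
    and lmi1: "psd_mat (block_mat (Phat - (1 / lam1) *\<^sub>R matrix_inv Y) (A ** Phat + B ** Psi)
                                  (transpose (A ** Phat + B ** Psi)) (lam0 *\<^sub>R Phat))"
    and e: "e \<bullet> (matrix_inv Phat *v e) \<le> 1" and w: "w \<bullet> (Y *v w) \<le> 1"
  shows "((A + B ** (Psi ** matrix_inv Phat)) *v e + w) \<bullet> (matrix_inv Phat *v ((A + B ** (Psi ** matrix_inv Phat)) *v e + w)) \<le> 1"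
proof -
  define \<Phi> where "\<Phi> = matrix_inv Phat"
  define Yi where "Yi = matrix_inv Y"
  define F where "F = A + B ** (Psi ** \<Phi>)"
  define G where "G = A ** Phat + B ** Psi"
  define x where "x = F *v e + w"
  have Ge: "G *v (\<Phi> *v v) = F *v v" for v
    using inv_mv(1)[OF Ppd, of v] unfolding F_def G_def \<Phi>_def
    by (simp add: matrix_vector_mult_add_rdistrib matrix_vector_mul_assoc[symmetric])
  define z where "z = \<Phi> *v x"
  define b where "b = - (\<Phi> *v e)"
  define q where "q = x \<bullet> (\<Phi> *v x)"
  define c where "c = z \<bullet> (Yi *v z)"
  define \<epsilon> where "\<epsilon> = e \<bullet> (\<Phi> *v e)"
  define \<omega> where "\<omega> = w \<bullet> (Y *v w)"
  have Phsym: "transpose \<Phi> = \<Phi>" unfolding \<Phi>_def by (rule pd_inv_sym[OF Ppd])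
  have Yisym: "transpose Yi = Yi" unfolding Yi_def by (rule pd_inv_sym[OF Ypd])
  have "0 \<le> vjoin z b \<bullet> (block_mat (Phat - (1 / lam1) *\<^sub>R Yi) G (transpose G) (lam0 *\<^sub>R Phat) *v vjoin z b)"
    using lmi1 unfolding psd_mat_def Yi_def G_def by blast
  also have "\<dots> = z \<bullet> ((Phat - (1 / lam1) *\<^sub>R Yi) *v z) + z \<bullet> (G *v b) + b \<bullet> (transpose G *v z) + b \<bullet> ((lam0 *\<^sub>R Phat) *v b)"
    by (rule block_quad)
  finally have main: "0 \<le> z \<bullet> ((Phat - (1 / lam1) *\<^sub>R Yi) *v z) + z \<bullet> (G *v b) + b \<bullet> (transpose G *v z) + b \<bullet> ((lam0 *\<^sub>R Phat) *v b)" .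
  have zPz: "z \<bullet> (Phat *v z) = q"
    unfolding z_def q_def \<Phi>_def using inv_mv(1)[OF Ppd] by (simp add: inner_commute)
  have t1: "z \<bullet> ((Phat - (1 / lam1) *\<^sub>R Yi) *v z) = q - c / lam1"
    using zPz unfolding c_def
    by (simp add: matrix_vector_mult_diff_rdistrib scaleR_matrix_vector_assoc[symmetric] inner_diff_right)
  have Gb: "G *v b = - (F *v e)" unfolding b_def
    by (simp add: Ge matrix_vector_mult_scaleR[of G "-1", simplified])
  have zx: "z \<bullet> x = q" unfolding z_def q_def by (simp add: inner_commute)
  have zFe: "z \<bullet> (F *v e) = q - z \<bullet> w"
  proof -
    have "F *v e = x - w" by (simp add: x_def)
    then show ?thesis using zx by (simp add: inner_diff_right)
  qed
  have t2: "z \<bullet> (G *v b) = - (q - z \<bullet> w)" using Gb zFe by simp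
  have t3: "b \<bullet> (transpose G *v z) = - (q - z \<bullet> w)"
    using dot_mat_transpose[of b "transpose G" z] Gb zFe by (simp add: inner_commute)
  have t4: "b \<bullet> ((lam0 *\<^sub>R Phat) *v b) = lam0 * \<epsilon>"
  proof -
    have "Phat *v b = - e" unfolding b_def \<Phi>_def using inv_mv(1)[OF Ppd]
      by (simp add: matrix_vector_mult_scaleR[of Phat "-1", simplified])
    then show ?thesis unfolding \<epsilon>_def b_def
      by (simp add: scaleR_matrix_vector_assoc[symmetric] inner_commute)
  qed
  have cs: "2 * (z \<bullet> w) \<le> lam1 * \<omega> + c / lam1"
  proof -
    define v where "v = lam1 *\<^sub>R (Y *v w) - z"
    have "0 \<le> v \<bullet> (Yi *v v)" unfolding Yi_def by (rule pd_nonneg[OF pd_inv_pd[OF Ypd]])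
    moreover have "Yi *v (Y *v w) = w" unfolding Yi_def by (rule inv_mv(2)[OF Ypd])
    moreover have "(Y *v w) \<bullet> (Yi *v z) = w \<bullet> z"
      using sym_dot[OF Yisym, of "Y *v w" z] \<open>Yi *v (Y *v w) = w\<close> by simp
    ultimately have "0 \<le> lam1 * lam1 * \<omega> - 2 * lam1 * (z \<bullet> w) + c"
      unfolding v_def \<omega>_def c_def
      by (simp add: matrix_vector_mult_diff_distrib matrix_vector_mult_scaleR inner_diff_left
          inner_diff_right inner_commute algebra_simps)
    then have "2 * lam1 * (z \<bullet> w) \<le> lam1 * (lam1 * \<omega> + c / lam1)"
      using lam(2) by (simp add: algebra_simps)
    then show ?thesis using lam(2) by (simp add: mult.assoc)
  qed
  have "q \<le> lam1 * \<omega> + lam0 * \<epsilon>"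
    using main t1 t2 t3 t4 cs by (simp add: algebra_simps)
  also have "\<dots> \<le> lam1 + lam0"
    using lam e w unfolding \<epsilon>_def \<omega>_def \<Phi>_def
    by (intro add_mono) (simp_all add: mult_left_le)
  also have "\<dots> \<le> 1" using lam by simp
  finally show ?thesis unfolding q_def x_def F_def \<Phi>_def .
qed

lemma sphere_ne: "sphere (0::real^'n) 1 \<noteq> {}"
proof -
  have "(axis undefined 1 :: real^'n) \<in> sphere 0 1" by simp
  then show ?thesis by blast
qed

lemma quad_bound:
  fixes M R :: "real^'n^'n"
  assumes pos: "\<forall>x. x \<noteq> 0 \<longrightarrow> 0 < x \<bullet> (M *v x)"
  shows "\<exists>\<eta>>0. \<forall>x. \<eta> * (x \<bullet> (R *v x)) \<le> x \<bullet> (M *v x)"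
proof -
  let ?S = "sphere (0::real^'n) 1"
  obtain xm where xm: "xm \<in> ?S" "\<forall>y\<in>?S. xm \<bullet> (M *v xm) \<le> y \<bullet> (M *v y)"
    using continuous_attains_inf[OF compact_sphere sphere_ne cont_quad] by blast
  obtain xM where xM: "xM \<in> ?S" "\<forall>y\<in>?S. y \<bullet> (R *v y) \<le> xM \<bullet> (R *v xM)"
    using continuous_attains_sup[OF compact_sphere sphere_ne cont_quad] by blast
  define m where "m = xm \<bullet> (M *v xm)"
  define C where "C = xM \<bullet> (R *v xM)"
  have "xm \<noteq> 0" using xm(1) by auto
  then have m0: "m > 0" using pos m_def by auto
  define \<eta> where "\<eta> = m / (\<bar>C\<bar> + 1)"
  have e0: "\<eta> > 0" using m0 by (simp add: \<eta>_def)
  have eC: "\<eta> * \<bar>C\<bar> \<le> m" using m0 unfolding \<eta>_def by (simp add: field_simps)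
  show ?thesis
  proof (intro exI[of _ \<eta>] conjI allI e0)
    fix x :: "real^'n"
    show "\<eta> * (x \<bullet> (R *v x)) \<le> x \<bullet> (M *v x)"
    proof (cases "x = 0")
      case True then show ?thesis by simp
    next
      case False
      define n where "n = norm x"
      have n0: "n > 0" using False n_def by simp
      define y where "y = (1/n) *\<^sub>R x"
      have yS: "y \<in> ?S" using n0 by (simp add: y_def n_def)
      have x: "x = n *\<^sub>R y" using n0 by (simp add: y_def)
      have fx: "x \<bullet> (M *v x) = n^2 * (y \<bullet> (M *v y))" and gx: "x \<bullet> (R *v x) = n^2 * (y \<bullet> (R *v y))"
        using x quad_scale by metis+
      have "m \<le> y \<bullet> (M *v y)" using xm(2) yS m_def by blast
      moreover have "y \<bullet> (R *v y) \<le> C" using xM(2) yS C_def by blast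
      moreover have "n^2 > 0" using n0 by simp
      ultimately have "\<eta> * (y \<bullet> (R *v y)) \<le> y \<bullet> (M *v y)"
        using eC e0 by (smt (verit) mult_left_mono abs_ge_self)
      then show ?thesis unfolding fx gx using \<open>n^2 > 0\<close>
        by (smt (verit) mult.left_commute mult_left_mono)
    qed
  qed
qed



lemma perturb:
  fixes M :: "real^'n^'n"
  assumes Mpd: "pd_mat M" and eta: "0 < \<eta>" "\<eta> < 1"
    and e: "e \<bullet> (M *v e) \<le> 1 - \<eta>" and d: "d \<bullet> (M *v d) \<le> \<eta>^3 / 2"
  shows "(d + e) \<bullet> (M *v (d + e)) \<le> 1"
proof -
  define D where "D = d \<bullet> (M *v d)"
  define r where "r = e \<bullet> (M *v e)"
  define m where "m = d \<bullet> (M *v e)"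
  have sym: "transpose M = M" using Mpd pd_mat_def by blast
  have em: "e \<bullet> (M *v d) = m" unfolding m_def using sym_dot[OF sym, of e d] by (simp add: inner_commute)
  have tot: "(d + e) \<bullet> (M *v (d + e)) = D + 2 * m + r"
    unfolding D_def r_def using em m_def by (simp add: matrix_vector_right_distrib inner_add_left inner_add_right)
  have "0 \<le> (d - \<eta> *\<^sub>R e) \<bullet> (M *v (d - \<eta> *\<^sub>R e))" by (rule pd_nonneg[OF Mpd])
  also have "\<dots> = D - 2 * \<eta> * m + \<eta>^2 * r"
    unfolding D_def r_def using em m_def
    by (simp add: matrix_vector_mult_diff_distrib matrix_vector_mult_scaleR inner_diff_left inner_diff_right power2_eq_square algebra_simps)
  finally have h1: "2 * \<eta> * m \<le> D + \<eta>^2 * r" by simp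
  have D0: "D \<ge> 0" unfolding D_def by (rule pd_nonneg[OF Mpd])
  have a1: "D * (1 + \<eta>) \<le> (\<eta>^3/2) * (1 + \<eta>)" using d eta unfolding D_def by (intro mult_right_mono) auto
  have a2: "(\<eta> * (1 + \<eta>)) * r \<le> (\<eta> * (1 + \<eta>)) * (1 - \<eta>)" using e eta unfolding r_def by (intro mult_left_mono) auto
  have poly: "(\<eta>^3/2) * (1 + \<eta>) + (\<eta> * (1 + \<eta>)) * (1 - \<eta>) = \<eta> - \<eta>^3 * (1 - \<eta>) / 2"
    by (simp add: algebra_simps power3_eq_cube power2_eq_square add_divide_distrib[symmetric])
  have p0: "\<eta>^3 * (1 - \<eta>) \<ge> 0" using eta by simp
  have "\<eta> * (D + 2 * m + r) = \<eta> * D + 2 * \<eta> * m + \<eta> * r" by (simp add: algebra_simps)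
  also have "\<dots> \<le> \<eta> * D + D + \<eta>^2 * r + \<eta> * r" using h1 by simp
  also have "\<dots> = D * (1 + \<eta>) + (\<eta> * (1 + \<eta>)) * r" by (simp add: algebra_simps power2_eq_square)
  also have "\<dots> \<le> \<eta> * 1" using a1 a2 poly p0 by simp
  finally have "D + 2 * m + r \<le> 1" using eta by (simp add: mult_le_cancel_left_pos)
  then show ?thesis using tot by simp
qed



lemma open_quad_ball: "open {x::real^'n. (x - p) \<bullet> (M *v (x - p)) < \<delta>}"
  by (intro open_Collect_less continuous_intros linear_continuous_on matrix_vector_mul_bounded_linear
      continuous_on_compose2[OF linear_continuous_on[OF matrix_vector_mul_bounded_linear]]) auto

lemma interior_from_ball:
  fixes M :: "real^'n^'n" and S :: "(real^'n) set"
  assumes "\<delta> > 0" "\<And>d. d \<bullet> (M *v d) < \<delta> \<Longrightarrow> p + d \<in> S"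
  shows "interior S \<noteq> {}"
proof -
  let ?T = "{x::real^'n. (x - p) \<bullet> (M *v (x - p)) < \<delta>}"
  have "?T \<subseteq> S"
  proof
    fix x assume "x \<in> ?T"
    then have "p + (x - p) \<in> S" using assms(2) by blast
    then show "x \<in> S" by simp
  qed
  then have "?T \<subseteq> interior S" using open_quad_ball by (rule interior_maximal)
  moreover have "p \<in> ?T" using assms(1) by simp
  ultimately show ?thesis by blast
qed

lemma part2:
  fixes P Phat :: "real^'n^'n"
  assumes Ppd: "pd_mat P" and Phpd: "pd_mat Phat" and lmi3: "pd_mat (matrix_inv P - Phat)"
  shows "interior (pontryagin_diff {x. (x - p) \<bullet> (P *v (x - p)) \<le> 1} {e. e \<bullet> (matrix_inv Phat *v e) \<le> 1}) \<noteq> {}"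
proof -
  define Pi where "Pi = matrix_inv P"
  define \<Phi> where "\<Phi> = matrix_inv Phat"
  obtain \<eta>0 where e0: "\<eta>0 > 0" and qb: "\<forall>z. \<eta>0 * (z \<bullet> (Pi *v z)) \<le> z \<bullet> ((Pi - Phat) *v z)"
    using quad_bound[of "matrix_inv P - Phat" "matrix_inv P"] lmi3 unfolding pd_mat_def Pi_def by blast
  define \<eta>1 where "\<eta>1 = min \<eta>0 (1/2)"
  have e1: "0 < \<eta>1" "\<eta>1 < 1" using e0 by (auto simp: \<eta>1_def)
  have Pipd: "pd_mat Pi" unfolding Pi_def by (rule pd_inv_pd[OF Ppd])
  have qb1: "z \<bullet> (Phat *v z) \<le> (1 - \<eta>1) * (z \<bullet> (Pi *v z))" for z
  proof -
    have "\<eta>1 * (z \<bullet> (Pi *v z)) \<le> \<eta>0 * (z \<bullet> (Pi *v z))"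
      using pd_nonneg[OF Pipd, of z] by (intro mult_right_mono) (auto simp: \<eta>1_def)
    also have "\<dots> \<le> z \<bullet> (Pi *v z) - z \<bullet> (Phat *v z)" using qb by (simp add: matrix_vector_mult_diff_rdistrib inner_diff_right)
    finally show ?thesis by (simp add: algebra_simps)
  qed
  define \<eta> where "\<eta> = \<eta>1 / (1 + \<eta>1)"
  have eta: "0 < \<eta>" "\<eta> < 1" using e1 by (auto simp: \<eta>_def)
  have Phsym: "transpose \<Phi> = \<Phi>" unfolding \<Phi>_def by (rule pd_inv_sym[OF Phpd])
  have rb: "e \<bullet> (P *v e) \<le> 1 - \<eta>" if e: "e \<bullet> (\<Phi> *v e) \<le> 1" for e
  proof -
    define z where "z = P *v e"
    define r where "r = e \<bullet> (P *v e)"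
    have zPi: "z \<bullet> (Pi *v z) = r" unfolding z_def r_def Pi_def using inv_mv(2)[OF Ppd] by (simp add: inner_commute)
    have ze: "z \<bullet> e = r" unfolding z_def r_def by (simp add: inner_commute)
    have "0 \<le> (Phat *v z - e) \<bullet> (\<Phi> *v (Phat *v z - e))" by (rule pd_nonneg[OF pd_inv_pd[OF Phpd], folded \<Phi>_def])
    moreover have "\<Phi> *v (Phat *v z) = z" unfolding \<Phi>_def by (rule inv_mv(2)[OF Phpd])
    moreover have "e \<bullet> z = (Phat *v z) \<bullet> (\<Phi> *v e)"
      using sym_dot[OF Phsym, of "Phat *v z" e] \<open>\<Phi> *v (Phat *v z) = z\<close> by (simp add: inner_commute)
    ultimately have "0 \<le> (Phat *v z) \<bullet> z - 2 * (z \<bullet> e) + e \<bullet> (\<Phi> *v e)"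
      by (simp add: matrix_vector_mult_diff_distrib inner_diff_left inner_diff_right inner_commute)
    then have "2 * r \<le> z \<bullet> (Phat *v z) + 1" using e ze by (simp add: inner_commute)
    also have "\<dots> \<le> (1 - \<eta>1) * r + 1" using qb1[of z] zPi by simp
    finally have "r * (1 + \<eta>1) \<le> 1" by (simp add: algebra_simps)
    then have "r \<le> 1 / (1 + \<eta>1)" using e1 by (simp add: field_simps)
    also have "1 / (1 + \<eta>1) = 1 - \<eta>" using e1 by (simp add: \<eta>_def field_simps)
    finally show ?thesis unfolding r_def .
  qed
  show ?thesis
  proof (rule interior_from_ball[of "\<eta>^3/2" P])
    show "0 < \<eta>^3/2" using eta by simp
    fix d assume d: "d \<bullet> (P *v d) < \<eta>^3/2"
    show "p + d \<in> pontryagin_diff {x. (x - p) \<bullet> (P *v (x - p)) \<le> 1} {e. e \<bullet> (matrix_inv Phat *v e) \<le> 1}"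
      unfolding pontryagin_diff_def
    proof (safe)
      fix e assume "e \<bullet> (matrix_inv Phat *v e) \<le> 1"
      then have "e \<bullet> (P *v e) \<le> 1 - \<eta>" using rb \<Phi>_def by blast
      then have "(d + e) \<bullet> (P *v (d + e)) \<le> 1" using perturb[OF Ppd eta] d by simp
      then show "(p + d + e - p) \<bullet> (P *v (p + d + e - p)) \<le> 1" by (simp add: add.commute add.left_commute)
    qed
  qed
qed



lemma part3:
  fixes Q :: "real^'m^'m" and Phat :: "real^'n^'n" and Psi :: "real^'n^'m"
  assumes Qpd: "pd_mat Q" and Phpd: "pd_mat Phat"
    and lmi2: "pd_mat (block_mat Phat (transpose Psi ** msqrt Q) (msqrt Q ** Psi) (mat 1))"
  shows "interior (pontryagin_diff {u. u \<bullet> (Q *v u) \<le> 1}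
            ((\<lambda>e. (Psi ** matrix_inv Phat) *v e) ` {e. e \<bullet> (matrix_inv Phat *v e) \<le> 1})) \<noteq> {}"
proof -
  define S where "S = msqrt Q"
  have Spd: "pd_mat S" and SS: "S ** S = Q" using msqrt_props[OF Qpd] S_def by auto
  have Ssym: "transpose S = S" using Spd pd_mat_def by blast
  define \<Phi> where "\<Phi> = matrix_inv Phat"
  define M2 where "M2 = Phat - transpose Psi ** Q ** Psi"
  have M2q: "a \<bullet> (M2 *v a) = a \<bullet> (Phat *v a) - (Psi *v a) \<bullet> (Q *v (Psi *v a))" for a
  proof -
    have "a \<bullet> ((transpose Psi ** Q ** Psi) *v a) = a \<bullet> (transpose Psi *v (Q *v (Psi *v a)))"
      by (simp add: matrix_vector_mul_assoc matrix_mul_assoc)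
    also have "\<dots> = (Psi *v a) \<bullet> (Q *v (Psi *v a))" using dot_mat_transpose[of a "transpose Psi"] by simp
    finally show ?thesis unfolding M2_def by (simp add: matrix_vector_mult_diff_rdistrib inner_diff_right)
  qed
  have pos: "\<forall>a. a \<noteq> 0 \<longrightarrow> 0 < a \<bullet> (M2 *v a)"
  proof (intro allI impI)
    fix a :: "real^'n" assume a0: "a \<noteq> 0"
    define b where "b = - (S *v (Psi *v a))"
    have bb: "b \<bullet> (mat 1 *v b) = (Psi *v a) \<bullet> (Q *v (Psi *v a))"
    proof -
      have "b \<bullet> (mat 1 *v b) = (S *v (Psi *v a)) \<bullet> (S *v (Psi *v a))" by (simp add: b_def)
      also have "\<dots> = (Psi *v a) \<bullet> (S *v (S *v (Psi *v a)))" using sym_dot[OF Ssym] by metis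
      also have "\<dots> = (Psi *v a) \<bullet> (Q *v (Psi *v a))" by (simp add: matrix_vector_mul_assoc SS matrix_mul_assoc)
      finally show ?thesis .
    qed
    have "0 < vjoin a b \<bullet> (block_mat Phat (transpose Psi ** S) (S ** Psi) (mat 1) *v vjoin a b)"
      using lmi2 a0 unfolding pd_mat_def S_def by (simp add: vjoin_eq0)
    also have "\<dots> = a \<bullet> (Phat *v a) + a \<bullet> ((transpose Psi ** S) *v b) + b \<bullet> ((S ** Psi) *v a) + b \<bullet> (mat 1 *v b)"
      by (rule block_quad)
    also have "a \<bullet> ((transpose Psi ** S) *v b) = - (b \<bullet> b)"
    proof -
      have "a \<bullet> ((transpose Psi ** S) *v b) = a \<bullet> (transpose Psi *v (S *v b))" by (simp add: matrix_vector_mul_assoc)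
      also have "\<dots> = (Psi *v a) \<bullet> (S *v b)" using dot_mat_transpose[of a "transpose Psi"] by simp
      also have "\<dots> = (S *v (Psi *v a)) \<bullet> b" using sym_dot[OF Ssym] by blast
      finally show ?thesis by (simp add: b_def)
    qed
    also have "b \<bullet> ((S ** Psi) *v a) = - (b \<bullet> b)" by (simp add: b_def matrix_vector_mul_assoc[symmetric])
    finally show "0 < a \<bullet> (M2 *v a)" unfolding M2q using bb by simp
  qed
  obtain \<eta>0 where e0: "\<eta>0 > 0" and qb: "\<forall>a. \<eta>0 * (a \<bullet> (Phat *v a)) \<le> a \<bullet> (M2 *v a)"
    using quad_bound[OF pos, of Phat] by blast
  define \<eta> where "\<eta> = min \<eta>0 (1/2)"
  have eta: "0 < \<eta>" "\<eta> < 1" using e0 by (auto simp: \<eta>_def)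
  have kb: "((Psi ** \<Phi>) *v e) \<bullet> (Q *v ((Psi ** \<Phi>) *v e)) \<le> 1 - \<eta>" if e: "e \<bullet> (\<Phi> *v e) \<le> 1" for e
  proof -
    define a where "a = \<Phi> *v e"
    have aPa: "a \<bullet> (Phat *v a) = e \<bullet> (\<Phi> *v e)" unfolding a_def \<Phi>_def using inv_mv(1)[OF Phpd] by (simp add: inner_commute)
    have ge0: "0 \<le> e \<bullet> (\<Phi> *v e)" unfolding \<Phi>_def by (rule pd_nonneg[OF pd_inv_pd[OF Phpd]])
    have "\<eta> * (a \<bullet> (Phat *v a)) \<le> \<eta>0 * (a \<bullet> (Phat *v a))"
      using aPa ge0 by (intro mult_right_mono) (auto simp: \<eta>_def)
    also have "\<dots> \<le> a \<bullet> (Phat *v a) - (Psi *v a) \<bullet> (Q *v (Psi *v a))" using qb M2q by metis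
    finally have "(Psi *v a) \<bullet> (Q *v (Psi *v a)) \<le> (1 - \<eta>) * (e \<bullet> (\<Phi> *v e))" using aPa by (simp add: algebra_simps)
    also have "\<dots> \<le> (1 - \<eta>) * 1" using e eta by (intro mult_left_mono) auto
    finally show ?thesis by (simp add: a_def matrix_vector_mul_assoc)
  qed
  show ?thesis
  proof (rule interior_from_ball[of "\<eta>^3/2" Q 0])
    show "0 < \<eta>^3/2" using eta by simp
    fix d assume d: "d \<bullet> (Q *v d) < \<eta>^3/2"
    show "0 + d \<in> pontryagin_diff {u. u \<bullet> (Q *v u) \<le> 1}
            ((\<lambda>e. (Psi ** matrix_inv Phat) *v e) ` {e. e \<bullet> (matrix_inv Phat *v e) \<le> 1})"
      unfolding pontryagin_diff_def
    proof (safe)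
      fix e assume "e \<bullet> (matrix_inv Phat *v e) \<le> 1"
      then have "((Psi ** \<Phi>) *v e) \<bullet> (Q *v ((Psi ** \<Phi>) *v e)) \<le> 1 - \<eta>" using kb \<Phi>_def by blast
      then show "(0 + d + (Psi ** matrix_inv Phat) *v e) \<bullet> (Q *v (0 + d + (Psi ** matrix_inv Phat) *v e)) \<le> 1"
        using perturb[OF Qpd eta] d \<Phi>_def by simp
    qed
  qed
qed



lemma traj_in_E:
  assumes step: "\<And>e v. e \<in> E \<Longrightarrow> v \<in> W \<Longrightarrow> F *v e + v \<in> E" and z: "0 \<in> E"
    and ws: "\<forall>s<t. ws s \<in> W"
  shows "err_traj F ws t \<in> E"
  using ws
proof (induction t)
  case 0 then show ?case using z by simp
next
  case (Suc t) then show ?case using step by simp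
qed

lemma traj_meas:
  fixes w :: "nat \<Rightarrow> 'a \<Rightarrow> real^'n" and F :: "real^'n^'n"
  assumes "\<forall>t<N. w t \<in> borel_measurable M"
  shows "t \<le> N \<Longrightarrow> (\<lambda>\<omega>. err_traj F (\<lambda>s. w s \<omega>) t) \<in> borel_measurable M"
proof (induction t)
  case 0 then show ?case by simp
next
  case (Suc t)
  then have IH: "(\<lambda>\<omega>. err_traj F (\<lambda>s. w s \<omega>) t) \<in> borel_measurable M" by simp
  have wt: "w t \<in> borel_measurable M" using assms Suc.prems by simp
  have "(\<lambda>\<omega>. F *v err_traj F (\<lambda>s. w s \<omega>) t) \<in> borel_measurable M"
    using measurable_compose[OF IH borel_measurable_continuous_onI[OF linear_continuous_on[OF matrix_vector_mul_bounded_linear]]] .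
  then show ?case using wt by simp
qed

theorem theorem2:
  fixes A :: "real^'n^'n" and B :: "real^'m^'n" and N :: nat and theta :: real
    and p :: "nat \<Rightarrow> real^'n" and P :: "nat \<Rightarrow> real^'n^'n" and Q :: "real^'m^'m"
    and Y :: "real^'n^'n"
    and M :: "'a measure" and w :: "nat \<Rightarrow> 'a \<Rightarrow> real^'n"
    and Phat :: "real^'n^'n" and Psi :: "real^'n^'m" and lam0 lam1 :: real
  assumes N: "N \<ge> 1"
    and theta_bd: "0 < theta" "theta < 1"
    and P_pd: "\<forall>t\<in>{1..N}. pd_mat (P t)"
    and Q_pd: "pd_mat Q"
    and Y_pd: "pd_mat Y"
    and prob: "prob_space M"
    and w_meas: "\<forall>t<N. w t \<in> borel_measurable M"
    and w_bound: "measure M {\<omega> \<in> space M. \<forall>t\<in>{0..<N}. w t \<omega> \<in> {v. v \<bullet> (Y *v v) \<le> 1}}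
                    \<ge> 1 - theta"
    and Phat_pd: "pd_mat Phat"
    and lam: "lam0 \<ge> 0" "lam1 > 0" "1 - lam0 - lam1 \<ge> 0"
    and lmi1: "psd_mat (block_mat (Phat - (1 / lam1) *\<^sub>R matrix_inv Y) (A ** Phat + B ** Psi)
                                  (transpose (A ** Phat + B ** Psi)) (lam0 *\<^sub>R Phat))"
    and lmi2: "pd_mat (block_mat Phat (transpose Psi ** msqrt Q) (msqrt Q ** Psi) (mat 1))"
    and lmi3: "\<forall>t\<in>{1..N}. pd_mat (matrix_inv (P t) - Phat)"
  shows "let \<Phi> = matrix_inv Phat; K = Psi ** \<Phi>;
             E = {e. e \<bullet> (\<Phi> *v e) \<le> 1}; Eu = (\<lambda>e. K *v e) ` E;
             X = (\<lambda>t. {x. (x - p t) \<bullet> (P t *v (x - p t)) \<le> 1});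
             U = {u. u \<bullet> (Q *v u) \<le> 1}
         in measure M {\<omega> \<in> space M. \<forall>t\<in>{1..N}. err_traj (A + B ** K) (\<lambda>s. w s \<omega>) t \<in> E}
              \<ge> 1 - theta
          \<and> (\<forall>t\<in>{1..N}. interior (pontryagin_diff (X t) E) \<noteq> {})
          \<and> interior (pontryagin_diff U Eu) \<noteq> {}"
proof -
  define \<Phi> where "\<Phi> = matrix_inv Phat"
  define K where "K = Psi ** \<Phi>"
  define E where "E = {e. e \<bullet> (\<Phi> *v e) \<le> 1}"
  define W where "W = {v. v \<bullet> (Y *v v) \<le> 1}"
  define F where "F = A + B ** K"
  interpret prob_space M by (rule prob)
  have step: "F *v e + v \<in> E" if "e \<in> E" "v \<in> W" for e v
    using invariance[OF Phat_pd Y_pd lam lmi1, of e v] that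
    unfolding E_def W_def F_def K_def \<Phi>_def by simp
  have z: "0 \<in> E" unfolding E_def by simp
  have clE: "closed E" unfolding E_def
    by (intro closed_Collect_le continuous_intros linear_continuous_on matrix_vector_mul_bounded_linear)
  define G where "G = {\<omega> \<in> space M. \<forall>t\<in>{1..N}. err_traj F (\<lambda>s. w s \<omega>) t \<in> E}"
  have Geq: "G = (\<Inter>t\<in>{1..N}. (\<lambda>\<omega>. err_traj F (\<lambda>s. w s \<omega>) t) -` E \<inter> space M)"
    unfolding G_def using N by auto
  have Gs: "G \<in> sets M" unfolding Geq
  proof (rule sets.finite_INT)
    show "finite {1..N}" by simp
    show "{1..N} \<noteq> {}" using N by simp
    fix t assume "t \<in> {1..N}"
    then have "(\<lambda>\<omega>. err_traj F (\<lambda>s. w s \<omega>) t) \<in> borel_measurable M"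
      using traj_meas[OF w_meas] by simp
    then show "(\<lambda>\<omega>. err_traj F (\<lambda>s. w s \<omega>) t) -` E \<inter> space M \<in> sets M"
      by (rule measurable_sets) (use clE borel_closed in auto)
  qed
  have sub: "{\<omega> \<in> space M. \<forall>t\<in>{0..<N}. w t \<omega> \<in> {v. v \<bullet> (Y *v v) \<le> 1}} \<subseteq> G"
  proof
    fix \<omega> assume h: "\<omega> \<in> {\<omega> \<in> space M. \<forall>t\<in>{0..<N}. w t \<omega> \<in> {v. v \<bullet> (Y *v v) \<le> 1}}"
    have "err_traj F (\<lambda>s. w s \<omega>) t \<in> E" if "t \<in> {1..N}" for t
    proof (rule traj_in_E[OF step z])
      show "\<forall>s<t. w s \<omega> \<in> W" using h that unfolding W_def by auto
    qed
    then show "\<omega> \<in> G" using h unfolding G_def by blast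
  qed
  have part1: "measure M G \<ge> 1 - theta"
    using w_bound finite_measure_mono[OF sub Gs] by linarith
  have part2': "\<forall>t\<in>{1..N}. interior (pontryagin_diff {x. (x - p t) \<bullet> (P t *v (x - p t)) \<le> 1} E) \<noteq> {}"
    using part2 P_pd Phat_pd lmi3 unfolding E_def \<Phi>_def by blast
  have part3': "interior (pontryagin_diff {u. u \<bullet> (Q *v u) \<le> 1} ((\<lambda>e. K *v e) ` E)) \<noteq> {}"
    using part3[OF Q_pd Phat_pd lmi2] unfolding E_def K_def \<Phi>_def .
  show ?thesis
    unfolding Let_def using part1 part2' part3'
    unfolding G_def F_def K_def E_def \<Phi>_def by blast
qed


end
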